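(* Let $n\ge 2$ and let $H=\langle h\rangle$ be a cyclic group of order $n$. Let $G=H\times H$, and regard the first factor $H\times\{e\}$ as "$H$" and the second factor $\{e\}\times H$ as "$P$" (so $P=\langle g\rangle$ with $g=(e,h)$ and $m=n$). Let $a,b\in\{0,1,\dots,n-1\}$ and put $\ell=|a-b|$. Define $$R=\{(h^a,x): x\in H,\ x\neq h^b\}\ \cup\ \{(x,h^b): x\in H,\ x\neq h^b\}\subseteq G .$$ If $\ell\neq 0$, then $R$ is an $\ell$-$(n,n,2n-2,n-2,n,n-2,2,1)$-partial direct product difference set in $G$ relative to the two factors. If $\ell=0$, then $R$ is an $(n,n,2n-2,n-2,n-2,2)$-direct product difference set in $G$ relative to the two factors.
   Context: Group ring notation: for a finite group $G$ and a subset $X\subseteq G$, write $X$ also for the element $\sum_{x\in X}x$ of the integral group ring $\mathbb Z[G]$, and $X^{(-1)}=\sum_{x\in X}x^{-1}$. Let $G=H\times P$ with $H=\langle h\rangle$ cyclic of order $n$ and $P=\langle g\rangle$ cyclic of order $m$, identifying $H$ with $H\times\{e_P\}$ and $P$ with $\{e_H\}\times P$; let $e$ be the identity of $G$. (1) Partial direct product difference set (PDPDS): let $\ell$ be an integer with $h^\ell\neq e_H$. A subset $R\subseteq G$ with $|R|=k$ is an $\ell$-$(n,m,k,\lambda_1,\lambda_2,\lambda_3,\mu_1,\mu_2)$-PDPDS in $G$ relative to $H$ and $P$ if in $\mathbb Z[G]$ $$RR^{(-1)}=(k-\lambda_1-\lambda_2+\mu_1)e+(\lambda_1-\mu_1)H+(\lambda_2-\mu_1)P+\mu_1G+(\lambda_3-\lambda_1)(h^\ell+h^{n-\ell})+(\mu_2-\mu_1)(h^\ell+h^{n-\ell})(g+g^2+\dots+g^{m-1}).$$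 (When $h^\ell\ne h^{n-\ell}$ this says: the quotients $r_1r_2^{-1}$, $r_1\neq r_2\in R$, represent every element of $H\setminus\{h^\ell,h^{n-\ell},e_H\}$ exactly $\lambda_1$ times, every non-identity element of $P$ exactly $\lambda_2$ times, each of $h^\ell,h^{n-\ell}$ exactly $\lambda_3$ times, every element of $(H\setminus\{h^\ell,h^{n-\ell},e_H\})\times(P\setminus\{e_P\})$ exactly $\mu_1$ times, and every element of $\{h^\ell,h^{n-\ell}\}\times(P\setminus\{e_P\})$ exactly $\mu_2$ times.) (2) Direct product difference set (DPDS): a subset $R\subseteq G$ with $|R|=k$ is an $(n,m,k,\lambda_1,\lambda_2,\mu)$-DPDS in $G$ relative to $H$ and $P$ if the quotients $r_1r_2^{-1}$, $r_1\ne r_2\in R$, represent every non-identity element of $H$ exactly $\lambda_1$ times, every non-identity element of $P$ exactly $\lambda_2$ times, and every element of $(H\setminus\{e_H\})\times(P\setminus\{e_P\})$ exactly $\mu$ times (and no other elements). *)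

theory Defs
  imports Main
begin

text \<open>Model: H = <h> cyclic of order n is represented by the residues {0..<n}
  under addition mod n (h^i corresponds to i mod n); P = <g> cyclic of order m
  by {0..<m}.  G = H x P is {0..<n} x {0..<m}, H is identified with the
  elements (i,0), P with the elements (0,j), identity e = (0,0).\<close>

definition grp :: "nat \<Rightarrow> nat \<Rightarrow> (nat \<times> nat) set" where
  "grp n m = {0..<n} \<times> {0..<m}"

definition quot :: "nat \<Rightarrow> nat \<Rightarrow> nat \<times> nat \<Rightarrow> nat \<times> nat \<Rightarrow> nat \<times> nat" where
  "quot n m r1 r2 = ((fst r1 + n - fst r2) mod n, (snd r1 + m - snd r2) mod m)"

text \<open>Coefficient of z in the group ring element R R^(-1).\<close>
definition coeff_RRinv :: "nat \<Rightarrow> nat \<Rightarrow> (nat \<times> nat) set \<Rightarrow> nat \<times> nat \<Rightarrow> nat" where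
  "coeff_RRinv n m R z = card {(r1, r2). r1 \<in> R \<and> r2 \<in> R \<and> quot n m r1 r2 = z}"

definition diff_count :: "nat \<Rightarrow> nat \<Rightarrow> (nat \<times> nat) set \<Rightarrow> nat \<times> nat \<Rightarrow> nat" where
  "diff_count n m R z = card {(r1, r2). r1 \<in> R \<and> r2 \<in> R \<and> r1 \<noteq> r2 \<and> quot n m r1 r2 = z}"

definition ind :: "bool \<Rightarrow> int" where
  "ind P = (if P then 1 else 0)"

text \<open>Coefficient at z = (i,j) of the right-hand side
  (k-l1-l2+mu1)e + (l1-mu1)H + (l2-mu1)P + mu1 G + (l3-l1)(h^l + h^(n-l))
   + (mu2-mu1)(h^l + h^(n-l))(g + g^2 + ... + g^(m-1)).\<close>
definition pdpds_rhs ::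
  "nat \<Rightarrow> nat \<Rightarrow> int \<Rightarrow> int \<Rightarrow> int \<Rightarrow> int \<Rightarrow> int \<Rightarrow> int \<Rightarrow> int \<Rightarrow> nat \<times> nat \<Rightarrow> int" where
  "pdpds_rhs n m l k l1 l2 l3 mu1 mu2 z =
     (k - l1 - l2 + mu1) * ind (z = (0, 0))
     + (l1 - mu1) * ind (snd z = 0)
     + (l2 - mu1) * ind (fst z = 0)
     + mu1
     + (l3 - l1) * (ind (z = (nat (l mod int n), 0)) + ind (z = (nat ((int n - l) mod int n), 0)))
     + (mu2 - mu1) * ((ind (fst z = nat (l mod int n)) + ind (fst z = nat ((int n - l) mod int n)))
                       * ind (snd z \<noteq> 0))"

text \<open>l-(n,m,k,l1,l2,l3,mu1,mu2)-PDPDS in G = H x P (group ring identity,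
  compared coefficientwise on all of G).\<close>
definition is_PDPDS ::
  "int \<Rightarrow> nat \<Rightarrow> nat \<Rightarrow> nat \<Rightarrow> int \<Rightarrow> int \<Rightarrow> int \<Rightarrow> int \<Rightarrow> int \<Rightarrow> (nat \<times> nat) set \<Rightarrow> bool" where
  "is_PDPDS l n m k l1 l2 l3 mu1 mu2 R \<longleftrightarrow>
     l mod int n \<noteq> 0 \<and> R \<subseteq> grp n m \<and> card R = k \<and>
     (\<forall>z \<in> grp n m. int (coeff_RRinv n m R z) = pdpds_rhs n m l (int k) l1 l2 l3 mu1 mu2 z)"

definition is_DPDS ::
  "nat \<Rightarrow> nat \<Rightarrow> nat \<Rightarrow> nat \<Rightarrow> nat \<Rightarrow> nat \<Rightarrow> (nat \<times> nat) set \<Rightarrow> bool" where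
  "is_DPDS n m k l1 l2 mu R \<longleftrightarrow>
     R \<subseteq> grp n m \<and> card R = k \<and>
     (\<forall>z \<in> grp n m. diff_count n m R z =
        (if z = (0, 0) then 0
         else if snd z = 0 then l1
         else if fst z = 0 then l2
         else mu))"

end

theory Submission
  imports Defs
begin

lemma modeq: fixes n x j c :: nat assumes "x<n" "j<n" "c<n"
  shows "((x+j) mod n = c) \<longleftrightarrow> x = (c+n-j) mod n"
  using assms by (auto simp: mod_if)

lemma quot_eq: fixes n x y i :: nat assumes "x<n" "y<n" "i<n"
  shows "((x+n-y) mod n = i) \<longleftrightarrow> x = (i+y) mod n"
  using assms by (auto simp: mod_if)

definition shift :: "nat \<Rightarrow> nat \<times> nat \<Rightarrow> nat \<times> nat \<Rightarrow> nat \<times> nat" where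
  "shift n z r = ((fst z + fst r) mod n, (snd z + snd r) mod n)"

lemma quot_shift: assumes "r1 \<in> grp n n" "r2 \<in> grp n n" "z \<in> grp n n"
  shows "quot n n r1 r2 = z \<longleftrightarrow> r1 = shift n z r2"
proof -
  obtain x1 y1 x2 y2 i j where e: "r1 = (x1,y1)" "r2 = (x2,y2)" "z = (i,j)" by (cases r1; cases r2; cases z) auto
  have b: "x1<n" "y1<n" "x2<n" "y2<n" "i<n" "j<n" using assms e by (auto simp: grp_def)
  have "quot n n r1 r2 = z \<longleftrightarrow> ((x1+n-x2) mod n = i \<and> (y1+n-y2) mod n = j)"
    using e by (simp add: quot_def)
  also have "\<dots> \<longleftrightarrow> x1 = (i+x2) mod n \<and> y1 = (j+y2) mod n"
    using quot_eq[of x1 n x2 i] quot_eq[of y1 n y2 j] b by simp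
  also have "\<dots> \<longleftrightarrow> r1 = shift n z r2" using e by (simp add: shift_def)
  finally show ?thesis .
qed

lemma coeff_shift: assumes "R \<subseteq> grp n n" "z \<in> grp n n"
  shows "coeff_RRinv n n R z = card {r\<in>R. shift n z r \<in> R}"
proof -
  have "{(r1, r2). r1 \<in> R \<and> r2 \<in> R \<and> quot n n r1 r2 = z} = (\<lambda>r. (shift n z r, r)) ` {r\<in>R. shift n z r \<in> R}"
  proof (rule set_eqI, rule iffI)
    fix p assume "p \<in> {(r1, r2). r1 \<in> R \<and> r2 \<in> R \<and> quot n n r1 r2 = z}"
    then obtain r1 r2 where p: "p = (r1,r2)" "r1 \<in> R" "r2 \<in> R" "quot n n r1 r2 = z" by blast
    then have "r1 = shift n z r2" using quot_shift[of r1 n r2 z] assms by blast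
    then show "p \<in> (\<lambda>r. (shift n z r, r)) ` {r\<in>R. shift n z r \<in> R}" using p by blast
  next
    fix p assume "p \<in> (\<lambda>r. (shift n z r, r)) ` {r\<in>R. shift n z r \<in> R}"
    then obtain r2 where p: "p = (shift n z r2, r2)" "r2 \<in> R" "shift n z r2 \<in> R" by blast
    then have "quot n n (shift n z r2) r2 = z" using quot_shift[of "shift n z r2" n r2 z] assms by blast
    then show "p \<in> {(r1, r2). r1 \<in> R \<and> r2 \<in> R \<and> quot n n r1 r2 = z}" using p by blast
  qed
  moreover have "inj_on (\<lambda>r. (shift n z r, r)) X" for X by (auto simp: inj_on_def)
  ultimately show ?thesis unfolding coeff_RRinv_def by (simp add: card_image)
qed

lemma add_self: fixes i x n :: nat assumes "i<n" "x<n" shows "(i + x) mod n = x \<longleftrightarrow> i = 0"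
  using assms by (auto simp: mod_if)

lemma shift_id: assumes "r \<in> grp n n" "z \<in> grp n n"
  shows "shift n z r = r \<longleftrightarrow> z = (0,0)"
proof -
  obtain x y i j where e: "r = (x,y)" "z = (i,j)" by (cases r; cases z) auto
  have b: "x<n" "y<n" "i<n" "j<n" using assms e by (auto simp: grp_def)
  have "shift n z r = r \<longleftrightarrow> (i + x) mod n = x \<and> (j + y) mod n = y" using e by (simp add: shift_def)
  then show ?thesis unfolding add_self[OF b(3,1)] add_self[OF b(4,2)] using e by simp
qed

lemma diff_shift: assumes "R \<subseteq> grp n n" "z \<in> grp n n"
  shows "diff_count n n R z = (if z = (0,0) then 0 else card {r\<in>R. shift n z r \<in> R})"
proof -
  have "{(r1, r2). r1 \<in> R \<and> r2 \<in> R \<and> r1 \<noteq> r2 \<and> quot n n r1 r2 = z} =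
     (\<lambda>r. (shift n z r, r)) ` {r\<in>R. shift n z r \<in> R \<and> shift n z r \<noteq> r}"
  proof (rule set_eqI, rule iffI)
    fix p assume "p \<in> {(r1, r2). r1 \<in> R \<and> r2 \<in> R \<and> r1 \<noteq> r2 \<and> quot n n r1 r2 = z}"
    then obtain r1 r2 where p: "p = (r1,r2)" "r1 \<in> R" "r2 \<in> R" "r1 \<noteq> r2" "quot n n r1 r2 = z" by blast
    then have "r1 = shift n z r2" using quot_shift[of r1 n r2 z] assms by blast
    then show "p \<in> (\<lambda>r. (shift n z r, r)) ` {r\<in>R. shift n z r \<in> R \<and> shift n z r \<noteq> r}" using p by blast
  next
    fix p assume "p \<in> (\<lambda>r. (shift n z r, r)) ` {r\<in>R. shift n z r \<in> R \<and> shift n z r \<noteq> r}"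
    then obtain r2 where p: "p = (shift n z r2, r2)" "r2 \<in> R" "shift n z r2 \<in> R" "shift n z r2 \<noteq> r2" by blast
    then have "quot n n (shift n z r2) r2 = z" using quot_shift[of "shift n z r2" n r2 z] assms by blast
    then show "p \<in> {(r1, r2). r1 \<in> R \<and> r2 \<in> R \<and> r1 \<noteq> r2 \<and> quot n n r1 r2 = z}" using p by blast
  qed
  moreover have "inj_on (\<lambda>r. (shift n z r, r)) X" for X by (auto simp: inj_on_def)
  moreover have "{r\<in>R. shift n z r \<in> R \<and> shift n z r \<noteq> r} = (if z = (0,0) then {} else {r\<in>R. shift n z r \<in> R})"
  proof (cases "z = (0,0)")
    case True
    then show ?thesis using assms shift_id[of _ n z] by auto
  next
    case False
    then show ?thesis using assms shift_id[of _ n z] by auto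
  qed
  ultimately show ?thesis unfolding diff_count_def by (simp add: card_image)
qed

lemma C1: fixes n b j c :: nat assumes "b<n" "j<n" "c<n"
  shows "card {x\<in>{0..<n}-{b}. (j+x) mod n = c} = (if (c+n-j) mod n = b then 0 else 1)"
proof -
  have "{x\<in>{0..<n}-{b}. (j+x) mod n = c} = {(c+n-j) mod n} - {b}"
  proof -
    have "(c+n-j) mod n < n" using assms by simp
    then have "(j + (c+n-j) mod n) mod n = c" using modeq[of "(c+n-j) mod n" n j c] assms by (simp add: add.commute)
    then show ?thesis using assms modeq[of _ n j c] by (auto simp: add.commute)
  qed
  then show ?thesis by auto
qed

lemma C2: fixes n b j c :: nat assumes "b<n" "j<n" "c<n"
  shows "card {x\<in>{0..<n}-{b}. (j+x) mod n \<noteq> c} = n - 1 - (if (c+n-j) mod n = b then 0 else 1)"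
proof -
  let ?S = "{0..<n}-{b}"
  have "{x\<in>?S. (j+x) mod n \<noteq> c} = ?S - {x\<in>?S. (j+x) mod n = c}" by auto
  then have "card {x\<in>?S. (j+x) mod n \<noteq> c} = card ?S - card {x\<in>?S. (j+x) mod n = c}"
    by (metis (no_types, lifting) card_Diff_subset finite_Diff finite_atLeastLessThan finite_subset mem_Collect_eq subsetI)
  then show ?thesis using C1[OF assms] assms by simp
qed


lemma card_or: assumes "finite S" "\<And>x. Q1 \<Longrightarrow> Q2 \<Longrightarrow> f x \<Longrightarrow> g x \<Longrightarrow> False"
  shows "card {x\<in>S. (Q1 \<and> f x) \<or> (Q2 \<and> g x)} =
    (if Q1 then card {x\<in>S. f x} else 0) + (if Q2 then card {x\<in>S. g x} else 0)"
proof -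
  have "{x\<in>S. (Q1 \<and> f x) \<or> (Q2 \<and> g x)} = {x\<in>S. Q1 \<and> f x} \<union> {x\<in>S. Q2 \<and> g x}" by auto
  moreover have "card ({x\<in>S. Q1 \<and> f x} \<union> {x\<in>S. Q2 \<and> g x}) = card {x\<in>S. Q1 \<and> f x} + card {x\<in>S. Q2 \<and> g x}"
    by (rule card_Un_disjoint) (use assms in auto)
  ultimately show ?thesis by auto
qed

lemma count_formula:
  fixes n a b i j :: nat and R :: "(nat \<times> nat) set"
  assumes "a < n" and "b < n" "i < n" "j < n"
    and RD: "R = {(a, x) | x. x < n \<and> x \<noteq> b} \<union> {(x, b) | x. x < n \<and> x \<noteq> b}"
  shows "card {r\<in>R. shift n (i,j) r \<in> R} =
     (if i = 0 then n - 1 - (if j = 0 then 0 else 1) else 0)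
   + (if j \<noteq> 0 \<and> (i+a) mod n \<noteq> b then 1 else 0)
   + (if j \<noteq> 0 \<and> (a+n-i) mod n \<noteq> b then 1 else 0)
   + (if j = 0 then n - 1 - (if i = 0 then 0 else 1) else 0)"
proof -
  define S where "S = {0..<n}-{b}"
  define P where "P r \<longleftrightarrow> shift n (i,j) r \<in> R" for r
  have fS: "finite S" unfolding S_def by simp
  have memR: "(p,q) \<in> R \<longleftrightarrow> (p=a \<and> q<n \<and> q\<noteq>b) \<or> (q=b \<and> p<n \<and> p\<noteq>b)" for p q
    using RD by auto
  have RU: "R = (\<lambda>x. (a,x)) ` S \<union> (\<lambda>x. (x,b)) ` S" using RD unfolding S_def by auto
  have "card {r\<in>R. P r} = card {r\<in>(\<lambda>x. (a,x)) ` S. P r} + card {r\<in>(\<lambda>x. (x,b)) ` S. P r}"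
  proof -
    have "{r\<in>R. P r} = {r\<in>(\<lambda>x. (a,x)) ` S. P r} \<union> {r\<in>(\<lambda>x. (x,b)) ` S. P r}" using RU by auto
    moreover have "card ({r\<in>(\<lambda>x. (a,x)) ` S. P r} \<union> {r\<in>(\<lambda>x. (x,b)) ` S. P r}) = card {r\<in>(\<lambda>x. (a,x)) ` S. P r} + card {r\<in>(\<lambda>x. (x,b)) ` S. P r}"
      by (rule card_Un_disjoint) (use fS in \<open>auto simp: S_def\<close>)
    ultimately show ?thesis by simp
  qed
  also have "card {r\<in>(\<lambda>x. (a,x)) ` S. P r} = card {x\<in>S. P (a,x)}"
  proof -
    have "{r\<in>(\<lambda>x. (a,x)) ` S. P r} = (\<lambda>x. (a,x)) ` {x\<in>S. P (a,x)}" by auto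
    then show ?thesis by (simp add: card_image inj_on_def)
  qed
  also have "card {r\<in>(\<lambda>x. (x,b)) ` S. P r} = card {x\<in>S. P (x,b)}"
  proof -
    have "{r\<in>(\<lambda>x. (x,b)) ` S. P r} = (\<lambda>x. (x,b)) ` {x\<in>S. P (x,b)}" by auto
    then show ?thesis by (simp add: card_image inj_on_def)
  qed
  also have "card {x\<in>S. P (a,x)} = (if i = 0 then card {x\<in>S. (j+x) mod n \<noteq> b} else 0)
        + (if (i+a) mod n \<noteq> b then card {x\<in>S. (j+x) mod n = b} else 0)"
  proof -
    have "P (a,x) \<longleftrightarrow> (i = 0 \<and> (j+x) mod n \<noteq> b) \<or> ((i+a) mod n \<noteq> b \<and> (j+x) mod n = b)" for x
      unfolding P_def shift_def fst_conv snd_conv memR using add_self[OF \<open>i<n\<close> \<open>a<n\<close>] \<open>a<n\<close> by auto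
    then have eq: "{x\<in>S. P (a,x)} = {x\<in>S. (i = 0 \<and> (j+x) mod n \<noteq> b) \<or> ((i+a) mod n \<noteq> b \<and> (j+x) mod n = b)}" by simp
    show ?thesis by (subst eq, rule card_or[OF fS]) auto
  qed
  also have "card {x\<in>S. P (x,b)} = (if j \<noteq> 0 then card {x\<in>S. (i+x) mod n = a} else 0)
        + (if j = 0 then card {x\<in>S. (i+x) mod n \<noteq> b} else 0)"
  proof -
    have "P (x,b) \<longleftrightarrow> (j \<noteq> 0 \<and> (i+x) mod n = a) \<or> (j = 0 \<and> (i+x) mod n \<noteq> b)" for x
      unfolding P_def shift_def fst_conv snd_conv memR using add_self[OF \<open>j<n\<close> \<open>b<n\<close>] \<open>b<n\<close> by auto
    then have eq: "{x\<in>S. P (x,b)} = {x\<in>S. (j \<noteq> 0 \<and> (i+x) mod n = a) \<or> (j = 0 \<and> (i+x) mod n \<noteq> b)}" by simp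
    show ?thesis by (subst eq, rule card_or[OF fS]) auto
  qed
  finally have fin: "card {r\<in>R. P r} = (if i = 0 then card {x\<in>S. (j+x) mod n \<noteq> b} else 0)
        + (if (i+a) mod n \<noteq> b then card {x\<in>S. (j+x) mod n = b} else 0) +
        ((if j \<noteq> 0 then card {x\<in>S. (i+x) mod n = a} else 0)
        + (if j = 0 then card {x\<in>S. (i+x) mod n \<noteq> b} else 0))" .
  have sub0: "(b+n-k) mod n = b \<longleftrightarrow> k = 0" if "k<n" for k using that \<open>b<n\<close> by (auto simp: mod_if)
  have f1: "card {x\<in>S. (j+x) mod n \<noteq> b} = n - 1 - (if j = 0 then 0 else 1)"
    unfolding S_def using C2[of b n j b] assms sub0[of j] by simp
  have f2: "card {x\<in>S. (j+x) mod n = b} = (if j = 0 then 0 else 1)"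
    unfolding S_def using C1[of b n j b] assms sub0[of j] by simp
  have f3: "card {x\<in>S. (i+x) mod n = a} = (if (a+n-i) mod n = b then 0 else 1)"
    unfolding S_def using C1[of b n i a] assms by simp
  have f4: "card {x\<in>S. (i+x) mod n \<noteq> b} = n - 1 - (if i = 0 then 0 else 1)"
    unfolding S_def using C2[of b n i b] assms sub0[of i] by simp
  show ?thesis using fin unfolding P_def f1 f2 f3 f4 by auto
qed

theorem proposition1:
  fixes n a b :: nat and R :: "(nat \<times> nat) set"
  assumes "n \<ge> 2" and "a < n" and "b < n"
    and "R = {(a, x) | x. x < n \<and> x \<noteq> b} \<union> {(x, b) | x. x < n \<and> x \<noteq> b}"
  shows "(\<bar>int a - int b\<bar> \<noteq> 0 \<longrightarrow>
           is_PDPDS \<bar>int a - int b\<bar> n n (2 * n - 2) (int n - 2) (int n) (int n - 2) 2 1 R)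
       \<and> (\<bar>int a - int b\<bar> = 0 \<longrightarrow> is_DPDS n n (2 * n - 2) (n - 2) (n - 2) 2 R)"
proof -
  note cf = count_formula[OF assms(2,3) _ _ assms(4)]
  have Rsub: "R \<subseteq> grp n n" using assms by (auto simp: grp_def)
  have n0: "(0,0) \<in> grp n n" using assms by (auto simp: grp_def)
  have "{r\<in>R. shift n (0,0) r \<in> R} = R" using Rsub shift_id[OF _ n0] by auto
  then have cardR: "card R = 2 * n - 2" using cf[of 0 0] assms(1) by simp
  define u where "u = (b+n-a) mod n"
  define v where "v = (a+n-b) mod n"
  have cu: "((i+a) mod n \<noteq> b) \<longleftrightarrow> i \<noteq> u" if "i<n" for i
    using modeq[of i n a b] that assms unfolding u_def by simp
  have cv: "((a+n-i) mod n \<noteq> b) \<longleftrightarrow> i \<noteq> v" if "i<n" for i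
    using quot_eq[of a n i b] modeq[of i n b a] that assms unfolding v_def by (metis add.commute)
  have cnt: "card {r\<in>R. shift n (i,j) r \<in> R} =
     (if i = 0 then n - 1 - (if j = 0 then 0 else 1) else 0)
   + (if j \<noteq> 0 \<and> i \<noteq> u then 1 else 0)
   + (if j \<noteq> 0 \<and> i \<noteq> v then 1 else 0)
   + (if j = 0 then n - 1 - (if i = 0 then 0 else 1) else 0)" if "i<n" "j<n" for i j
    using cf[OF that] cu[OF that(1)] cv[OF that(1)] by simp
  show ?thesis
  proof (intro conjI impI)
    assume ne: "\<bar>int a - int b\<bar> \<noteq> 0"
    define l where "l = \<bar>int a - int b\<bar>"
    have l1: "0 < l" "l < int n" using ne assms unfolding l_def by auto
    define L where "L = nat (l mod int n)"
    define L2 where "L2 = nat ((int n - l) mod int n)"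
    have uv: "(u = L \<and> v = L2) \<or> (u = L2 \<and> v = L)"
    proof (cases "a < b")
      case True
      then have "l = int (b - a)" unfolding l_def by simp
      then have "L = b - a" "L2 = n - (b - a)" using l1 assms True unfolding L_def L2_def
        by (simp_all add: of_nat_diff[symmetric] nat_mod_distrib del: of_nat_diff)
      moreover have "u = b - a" "v = n - (b - a)" using True assms unfolding u_def v_def by (auto simp: mod_if)
      ultimately show ?thesis by simp
    next
      case False
      then have "l = int (a - b)" unfolding l_def by simp
      then have "L = a - b" "L2 = n - (a - b)" using l1 assms False unfolding L_def L2_def
        by (simp_all add: of_nat_diff[symmetric] nat_mod_distrib del: of_nat_diff)
      moreover have "v = a - b" "u = n - (a - b)" using False ne assms unfolding u_def v_def by (auto simp: mod_if)
      ultimately show ?thesis by simp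
    qed
    have "(int n - l) mod int n = int n - l" using l1 by (intro mod_pos_pos_trivial) auto
    then have "L \<noteq> 0" "L2 \<noteq> 0" using l1 unfolding L_def L2_def by simp_all
    then have uvpos: "u \<noteq> 0" "v \<noteq> 0" using uv by auto
    show "is_PDPDS \<bar>int a - int b\<bar> n n (2 * n - 2) (int n - 2) (int n) (int n - 2) 2 1 R"
      unfolding is_PDPDS_def l_def[symmetric]
    proof (intro conjI ballI)
      show "l mod int n \<noteq> 0" using l1 by simp
      show "R \<subseteq> grp n n" by (rule Rsub)
      show "card R = 2 * n - 2" by (rule cardR)
    next
      fix z assume z: "z \<in> grp n n"
      obtain i j where zij: "z = (i,j)" "i<n" "j<n" using z by (cases z) (auto simp: grp_def)
      have k: "int (2 * n - 2) = 2 * int n - 2" using assms(1) by simp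
      show "int (coeff_RRinv n n R z) = pdpds_rhs n n l (int (2 * n - 2)) (int n - 2) (int n) (int n - 2) 2 1 z"
        unfolding coeff_shift[OF Rsub z] unfolding zij(1) cnt[OF zij(2,3)] pdpds_rhs_def k L_def[symmetric] L2_def[symmetric] ind_def
        using uv uvpos assms(1) by (auto simp: of_nat_diff)
    qed
  next
    assume "\<bar>int a - int b\<bar> = 0"
    then have ab: "a = b" by simp
    then have "u = 0" "v = 0" unfolding u_def v_def by auto
    show "is_DPDS n n (2 * n - 2) (n - 2) (n - 2) 2 R"
      unfolding is_DPDS_def
    proof (intro conjI ballI)
      show "R \<subseteq> grp n n" by (rule Rsub)
      show "card R = 2 * n - 2" by (rule cardR)
    next
      fix z assume z: "z \<in> grp n n"
      obtain i j where zij: "z = (i,j)" "i<n" "j<n" using z by (cases z) (auto simp: grp_def)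
      show "diff_count n n R z = (if z = (0, 0) then 0 else if snd z = 0 then n - 2 else if fst z = 0 then n - 2 else 2)"
        unfolding diff_shift[OF Rsub z] unfolding zij(1) cnt[OF zij(2,3)]
        using \<open>u = 0\<close> \<open>v = 0\<close> assms(1) by auto
    qed
  qed
qed
end
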